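(* Let $n\ge 2$ be odd. Then there exists a matching mechanism that is resolute and symmetric (i.e. $G^*$-symmetric).
   Context: Fix $n\ge 2$, $W=\{1,\dots,n\}$ (women), $M=\{n+1,\dots,2n\}$ (men), $I=W\cup M$. Permutations compose right-to-left. A preference profile is a function $p$ on $I$ assigning to each $x\in W$ a linear order $p(x)$ on $M$ and to each $y\in M$ a linear order $p(y)$ on $W$; $\mathcal{P}$ is the set of preference profiles. A matching is a permutation $\mu$ of $I$ with $\mu(W)=M$, $\mu(M)=W$ and $\mu(\mu(z))=z$ for all $z\in I$; $\mathcal{M}$ is the set of matchings. Let $G^*=\{\varphi\in\mathrm{Sym}(I):\{\varphi(W),\varphi(M)\}=\{W,M\}\}$. For a linear order $R$ on $X\subseteq I$ and $\varphi\in\mathrm{Sym}(I)$, $\varphi R$ is the relation on $\varphi(X)$ with $(a,b)\in\varphi R$ iff $(\varphi^{-1}(a),\varphi^{-1}(b))\in R$. For $p\in\mathcal{P}$ and $\varphi\in G^*$, $p^\varphi\in\mathcal{P}$ is defined by $p^\varphi(z)=\varphi\,p(\varphi^{-1}(z))$. For a permutation $\mu$, $\mu^\varphi=\varphi\mu\varphi^{-1}$, and for a set $S$ of permutations $S^\varphi=\{\mu^\varphi:\mu\in S\}$. A matching mechanism is a correspondence $F$ from $\mathcal{P}$ to $\mathcal{M}$. $F$ is resolute if $|F(p)|=1$ for all $p$. For $U\subseteq G^*$, $F$ is $U$-symmetric if $F(p^\varphi)=F(p)^\varphi$ for all $p\in\mathcal{P}$, $\varphi\in U$; symmetric means $G^*$-symmetric.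 *)

theory Defs
  imports "HOL-Combinatorics.Permutations"
begin

definition women :: "nat \<Rightarrow> nat set" where "women n = {1..n}"
definition men :: "nat \<Rightarrow> nat set" where "men n = {n+1..2*n}"
definition agents :: "nat \<Rightarrow> nat set" where "agents n = women n \<union> men n"

text \<open>A preference profile assigns to each agent a (reflexive) linear order, given as a
  relation, on the opposite side; outside I it is empty (so profiles are determined by
  their values on I).\<close>
type_synonym profile = "nat \<Rightarrow> (nat \<times> nat) set"

definition profiles :: "nat \<Rightarrow> profile set" where
  "profiles n = {p. (\<forall>x\<in>women n. linear_order_on (men n) (p x))
                  \<and> (\<forall>y\<in>men n. linear_order_on (women n) (p y))
                  \<and> (\<forall>z. z \<notin> agents n \<longrightarrow> p z = {})}"

definition matchings :: "nat \<Rightarrow> (nat \<Rightarrow> nat) set" where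
  "matchings n = {\<mu>. \<mu> permutes agents n \<and> \<mu> ` women n = men n \<and> \<mu> ` men n = women n
                     \<and> (\<forall>z\<in>agents n. \<mu> (\<mu> z) = z)}"

definition Gstar :: "nat \<Rightarrow> (nat \<Rightarrow> nat) set" where
  "Gstar n = {\<phi>. \<phi> permutes agents n \<and> {\<phi> ` women n, \<phi> ` men n} = {women n, men n}}"

definition rel_act :: "(nat \<Rightarrow> nat) \<Rightarrow> (nat \<times> nat) set \<Rightarrow> (nat \<times> nat) set" where
  "rel_act \<phi> R = {(a, b). (inv \<phi> a, inv \<phi> b) \<in> R}"

definition profile_act :: "(nat \<Rightarrow> nat) \<Rightarrow> profile \<Rightarrow> profile" where
  "profile_act \<phi> p = (\<lambda>z. rel_act \<phi> (p (inv \<phi> z)))"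

definition perm_conj :: "(nat \<Rightarrow> nat) \<Rightarrow> (nat \<Rightarrow> nat) \<Rightarrow> (nat \<Rightarrow> nat)" where
  "perm_conj \<phi> \<mu> = \<phi> \<circ> \<mu> \<circ> inv \<phi>"

definition mechanism :: "nat \<Rightarrow> (profile \<Rightarrow> (nat \<Rightarrow> nat) set) \<Rightarrow> bool" where
  "mechanism n F \<longleftrightarrow> (\<forall>p\<in>profiles n. F p \<subseteq> matchings n)"

definition resolute :: "nat \<Rightarrow> (profile \<Rightarrow> (nat \<Rightarrow> nat) set) \<Rightarrow> bool" where
  "resolute n F \<longleftrightarrow> (\<forall>p\<in>profiles n. card (F p) = 1)"

definition U_symmetric :: "nat \<Rightarrow> (nat \<Rightarrow> nat) set \<Rightarrow> (profile \<Rightarrow> (nat \<Rightarrow> nat) set) \<Rightarrow> bool" where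
  "U_symmetric n U F \<longleftrightarrow>
     (\<forall>p\<in>profiles n. \<forall>\<phi>\<in>U. F (profile_act \<phi> p) = perm_conj \<phi> ` F p)"

definition symmetric_mech :: "nat \<Rightarrow> (profile \<Rightarrow> (nat \<Rightarrow> nat) set) \<Rightarrow> bool" where
  "symmetric_mech n F \<longleftrightarrow> U_symmetric n (Gstar n) F"

end

theory Submission
  imports Defs
begin

lemma W_M_disj: "women n \<inter> men n = {}" by (auto simp: women_def men_def)
lemma W_ne_M: "n \<ge> 1 \<Longrightarrow> women n \<noteq> men n"
  using W_M_disj[of n] by (auto simp: women_def)

lemma Gstar_iff: "n \<ge> 1 \<Longrightarrow> \<phi> \<in> Gstar n \<longleftrightarrow> \<phi> permutes agents n \<and>
   ((\<phi> ` women n = women n \<and> \<phi> ` men n = men n) \<or> (\<phi> ` women n = men n \<and> \<phi> ` men n = women n))"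
  unfolding Gstar_def using W_ne_M[of n] by (auto simp: doubleton_eq_iff)

lemma Gstar_bij: "\<phi> \<in> Gstar n \<Longrightarrow> bij \<phi>"
  unfolding Gstar_def using permutes_bij by blast

lemma Gstar_perm: "\<phi> \<in> Gstar n \<Longrightarrow> \<phi> permutes agents n"
  unfolding Gstar_def by blast

lemma rel_act_comp: "bij \<phi> \<Longrightarrow> bij \<psi> \<Longrightarrow> rel_act (\<phi> \<circ> \<psi>) R = rel_act \<phi> (rel_act \<psi> R)"
  by (simp add: rel_act_def o_inv_distrib)

lemma profile_act_comp: "bij \<phi> \<Longrightarrow> bij \<psi> \<Longrightarrow>
   profile_act (\<phi> \<circ> \<psi>) p = profile_act \<phi> (profile_act \<psi> p)"
  by (simp add: profile_act_def rel_act_comp o_inv_distrib)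

lemma profile_act_id: "profile_act id p = p"
  by (simp add: profile_act_def rel_act_def)

lemma profile_act_inv: "bij \<phi> \<Longrightarrow> profile_act (inv \<phi>) (profile_act \<phi> p) = p"
  by (metis profile_act_comp bij_imp_bij_inv bij_is_inj inv_o_cancel profile_act_id)

lemma perm_conj_comp: "bij \<phi> \<Longrightarrow> bij \<psi> \<Longrightarrow>
   perm_conj (\<phi> \<circ> \<psi>) \<mu> = perm_conj \<phi> (perm_conj \<psi> \<mu>)"
  by (simp add: perm_conj_def o_inv_distrib o_assoc)

lemma Gstar_comp: "n \<ge> 1 \<Longrightarrow> \<phi> \<in> Gstar n \<Longrightarrow> \<psi> \<in> Gstar n \<Longrightarrow> \<phi> \<circ> \<psi> \<in> Gstar n"
proof -
  assume n: "n \<ge> 1" and a: "\<phi> \<in> Gstar n" "\<psi> \<in> Gstar n"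
  have e: "(\<phi> \<circ> \<psi>) ` A = \<phi> ` (\<psi> ` A)" for A by (simp add: image_comp)
  have "\<phi> \<circ> \<psi> permutes agents n" using a Gstar_perm permutes_compose by blast
  then show ?thesis using a unfolding Gstar_iff[OF n] e by metis
qed

lemma Gstar_inv: "n \<ge> 1 \<Longrightarrow> \<phi> \<in> Gstar n \<Longrightarrow> inv \<phi> \<in> Gstar n"
proof -
  assume n: "n \<ge> 1" and p: "\<phi> \<in> Gstar n"
  have inj: "inj \<phi>" using Gstar_bij[OF p] bij_is_inj by blast
  have "inv \<phi> permutes agents n" using permutes_inv Gstar_perm[OF p] by blast
  moreover have "inv \<phi> ` (\<phi> ` A) = A" for A using image_inv_f_f[OF inj] .
  ultimately show ?thesis using p unfolding Gstar_iff[OF n] by metis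
qed

lemma Gstar_id: "n \<ge> 1 \<Longrightarrow> id \<in> Gstar n"
  unfolding Gstar_iff by (auto simp: permutes_id)

lemma rel_act_linear: assumes "bij \<phi>" "linear_order_on A R"
  shows "linear_order_on (\<phi> ` A) (rel_act \<phi> R)"
proof -
  have inj: "inj \<phi>" and surj: "surj \<phi>" using assms(1) bij_is_inj bij_is_surj by auto
  have ii: "inv \<phi> (\<phi> x) = x" for x using inj by simp
  have ss: "\<phi> (inv \<phi> x) = x" for x using surj by (simp add: surj_f_inv_f)
  have injinv: "inv \<phi> x = inv \<phi> y \<Longrightarrow> x = y" for x y by (metis ss)
  from assms(2) have R: "R \<subseteq> A \<times> A" "refl_on A R" "trans R" "antisym R" "total_on A R"
    unfolding linear_order_on_def partial_order_on_def preorder_on_def by auto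
  have "rel_act \<phi> R \<subseteq> \<phi> ` A \<times> \<phi> ` A"
  proof
    fix z assume "z \<in> rel_act \<phi> R"
    then obtain a b where z: "z = (a,b)" "(inv \<phi> a, inv \<phi> b) \<in> R" by (auto simp: rel_act_def)
    then have "inv \<phi> a \<in> A" "inv \<phi> b \<in> A" using R(1) by auto
    then have "a \<in> \<phi> ` A" "b \<in> \<phi> ` A" by (metis ss image_eqI)+
    then show "z \<in> \<phi> ` A \<times> \<phi> ` A" using z by auto
  qed
  moreover have "refl_on (\<phi> ` A) (rel_act \<phi> R)"
    using R(2) by (auto simp: refl_on_def rel_act_def ii)
  moreover have "trans (rel_act \<phi> R)"
    using R(3) unfolding trans_on_def rel_act_def by blast
  moreover have "antisym (rel_act \<phi> R)"
    using R(4) injinv unfolding antisym_on_def rel_act_def by blast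
  moreover have "total_on (\<phi> ` A) (rel_act \<phi> R)"
    using R(5) unfolding total_on_def rel_act_def by (auto simp: ii)
  ultimately show ?thesis
    unfolding linear_order_on_def partial_order_on_def preorder_on_def by auto
qed

lemma Gstar_inv_out: "\<phi> \<in> Gstar n \<Longrightarrow> z \<notin> agents n \<Longrightarrow> inv \<phi> z = z"
  by (meson Gstar_perm permutes_inv permutes_not_in)

lemma Gstar_inv_img: "n \<ge> 1 \<Longrightarrow> \<phi> \<in> Gstar n \<Longrightarrow>
  (inv \<phi> ` women n = women n \<and> inv \<phi> ` men n = men n \<and> \<phi> ` women n = women n \<and> \<phi> ` men n = men n) \<or>
  (inv \<phi> ` women n = men n \<and> inv \<phi> ` men n = women n \<and> \<phi> ` women n = men n \<and> \<phi> ` men n = women n)"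
  by (metis Gstar_bij Gstar_iff bij_is_inj image_inv_f_f)

lemma profiles_act: assumes n: "n \<ge> 1" and p: "p \<in> profiles n" and g: "\<phi> \<in> Gstar n"
  shows "profile_act \<phi> p \<in> profiles n"
proof -
  have b: "bij \<phi>" using Gstar_bij[OF g] .
  have P: "\<forall>x\<in>women n. linear_order_on (men n) (p x)" "\<forall>y\<in>men n. linear_order_on (women n) (p y)"
     "\<forall>z. z \<notin> agents n \<longrightarrow> p z = {}" using p unfolding profiles_def by auto
  show ?thesis unfolding profiles_def
  proof (intro CollectI conjI ballI allI impI)
    fix x assume x: "x \<in> women n"
    show "linear_order_on (men n) (profile_act \<phi> p x)"
      using Gstar_inv_img[OF n g] proof
      assume h: "inv \<phi> ` women n = women n \<and> inv \<phi> ` men n = men n \<and> \<phi> ` women n = women n \<and> \<phi> ` men n = men n"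
      then have "inv \<phi> x \<in> women n" using x by blast
      then show ?thesis using rel_act_linear[OF b, of "men n"] P h by (simp add: profile_act_def)
    next
      assume h: "inv \<phi> ` women n = men n \<and> inv \<phi> ` men n = women n \<and> \<phi> ` women n = men n \<and> \<phi> ` men n = women n"
      then have "inv \<phi> x \<in> men n" using x by blast
      then show ?thesis using rel_act_linear[OF b, of "women n"] P h by (simp add: profile_act_def)
    qed
  next
    fix x assume x: "x \<in> men n"
    show "linear_order_on (women n) (profile_act \<phi> p x)"
      using Gstar_inv_img[OF n g] proof
      assume h: "inv \<phi> ` women n = women n \<and> inv \<phi> ` men n = men n \<and> \<phi> ` women n = women n \<and> \<phi> ` men n = men n"
      then have "inv \<phi> x \<in> men n" using x by blast
      then show ?thesis using rel_act_linear[OF b, of "women n"] P h by (simp add: profile_act_def)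
    next
      assume h: "inv \<phi> ` women n = men n \<and> inv \<phi> ` men n = women n \<and> \<phi> ` women n = men n \<and> \<phi> ` men n = women n"
      then have "inv \<phi> x \<in> women n" using x by blast
      then show ?thesis using rel_act_linear[OF b, of "men n"] P h by (simp add: profile_act_def)
    qed
  next
    fix z assume "z \<notin> agents n"
    then show "profile_act \<phi> p z = {}" using P(3) Gstar_inv_out[OF g]
      by (simp add: profile_act_def rel_act_def)
  qed
qed

lemma matchings_conj: assumes n: "n \<ge> 1" and m: "\<mu> \<in> matchings n" and g: "\<phi> \<in> Gstar n"
  shows "perm_conj \<phi> \<mu> \<in> matchings n"
proof -
  have b: "bij \<phi>" using Gstar_bij[OF g] .
  have pg: "\<phi> permutes agents n" using Gstar_perm[OF g] .
  have M: "\<mu> permutes agents n" "\<mu> ` women n = men n" "\<mu> ` men n = women n" "\<forall>z\<in>agents n. \<mu> (\<mu> z) = z"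
    using m unfolding matchings_def by auto
  have "perm_conj \<phi> \<mu> permutes agents n" unfolding perm_conj_def
    by (intro permutes_compose permutes_inv pg M(1))
  moreover have "perm_conj \<phi> \<mu> ` women n = men n \<and> perm_conj \<phi> \<mu> ` men n = women n"
  proof -
    have e: "perm_conj \<phi> \<mu> ` A = \<phi> ` (\<mu> ` (inv \<phi> ` A))" for A by (simp add: perm_conj_def image_comp)
    show ?thesis using Gstar_inv_img[OF n g] M(2,3) unfolding e by metis
  qed
  moreover have "\<forall>z\<in>agents n. perm_conj \<phi> \<mu> (perm_conj \<phi> \<mu> z) = z"
  proof
    fix z assume z: "z \<in> agents n"
    have "inv \<phi> z \<in> agents n" using z permutes_inv[OF pg] by (simp add: permutes_in_image)
    then show "perm_conj \<phi> \<mu> (perm_conj \<phi> \<mu> z) = z" using M(4) b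
      by (simp add: perm_conj_def bij_is_inj bij_is_surj surj_f_inv_f)
  qed
  ultimately show ?thesis unfolding matchings_def by blast
qed

lemma selection:
  assumes n: "n \<ge> 1"
  and H: "\<forall>p\<in>profiles n. \<exists>\<mu>\<in>matchings n. \<forall>\<phi>\<in>Gstar n. profile_act \<phi> p = p \<longrightarrow> perm_conj \<phi> \<mu> = \<mu>"
  shows "\<exists>F. mechanism n F \<and> resolute n F \<and> symmetric_mech n F"
proof -
  define orb where "orb p = {profile_act \<phi> p | \<phi>. \<phi> \<in> Gstar n}" for p
  define r where "r p = (SOME q. q \<in> orb p)" for p
  define m0 where "m0 q = (SOME \<mu>. \<mu> \<in> matchings n \<and> (\<forall>\<phi>\<in>Gstar n. profile_act \<phi> q = q \<longrightarrow> perm_conj \<phi> \<mu> = \<mu>))" for q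
  define g where "g p = (SOME \<phi>. \<phi> \<in> Gstar n \<and> profile_act \<phi> (r p) = p)" for p
  define F where "F p = {perm_conj (g p) (m0 (r p))}" for p
  have orb_eq: "orb (profile_act \<phi> p) = orb p" if "\<phi> \<in> Gstar n" for \<phi> p
  proof
    show "orb (profile_act \<phi> p) \<subseteq> orb p"
      using that by (auto simp: orb_def profile_act_comp[symmetric] Gstar_bij intro: Gstar_comp[OF n])
    show "orb p \<subseteq> orb (profile_act \<phi> p)"
    proof
      fix q assume "q \<in> orb p"
      then obtain \<psi> where \<psi>: "\<psi> \<in> Gstar n" "q = profile_act \<psi> p" by (auto simp: orb_def)
      have "q = profile_act (\<psi> \<circ> inv \<phi>) (profile_act \<phi> p)"
        using \<psi> that by (simp add: profile_act_comp Gstar_bij Gstar_inv[OF n] profile_act_inv bij_imp_bij_inv)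
      moreover have "\<psi> \<circ> inv \<phi> \<in> Gstar n" using \<psi> that Gstar_comp[OF n] Gstar_inv[OF n] by blast
      ultimately show "q \<in> orb (profile_act \<phi> p)" by (auto simp: orb_def)
    qed
  qed
  have r_eq: "r (profile_act \<phi> p) = r p" if "\<phi> \<in> Gstar n" for \<phi> p
    using orb_eq[OF that] by (simp add: r_def)
  have g_prop: "g p \<in> Gstar n \<and> profile_act (g p) (r p) = p" for p
  proof -
    have "p \<in> orb p" using Gstar_id[OF n] profile_act_id unfolding orb_def by (metis (mono_tags, lifting) mem_Collect_eq)
    then have "r p \<in> orb p" unfolding r_def by (metis someI)
    then obtain \<gamma> where \<gamma>: "\<gamma> \<in> Gstar n" "r p = profile_act \<gamma> p" by (auto simp: orb_def)
    then have "inv \<gamma> \<in> Gstar n \<and> profile_act (inv \<gamma>) (r p) = p"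
      using Gstar_inv[OF n] profile_act_inv Gstar_bij by simp
    then show ?thesis unfolding g_def by (rule someI[where P="\<lambda>\<phi>. \<phi> \<in> Gstar n \<and> profile_act \<phi> (r p) = p"])
  qed
  have r_prof: "r p \<in> profiles n" if "p \<in> profiles n" for p
  proof -
    have "r p \<in> orb p" unfolding r_def
      by (rule someI[of _ p]) (metis (mono_tags, lifting) Gstar_id[OF n] profile_act_id orb_def mem_Collect_eq)
    then show ?thesis using profiles_act[OF n that] by (auto simp: orb_def)
  qed
  have m0_prop: "m0 q \<in> matchings n \<and> (\<forall>\<phi>\<in>Gstar n. profile_act \<phi> q = q \<longrightarrow> perm_conj \<phi> (m0 q) = m0 q)"
    if "q \<in> profiles n" for q
  proof -
    have "\<exists>\<mu>\<in>matchings n. \<forall>\<phi>\<in>Gstar n. profile_act \<phi> q = q \<longrightarrow> perm_conj \<phi> \<mu> = \<mu>"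
      using H that by (rule bspec)
    then obtain \<mu> where "\<mu> \<in> matchings n \<and> (\<forall>\<phi>\<in>Gstar n. profile_act \<phi> q = q \<longrightarrow> perm_conj \<phi> \<mu> = \<mu>)"
      by (elim bexE) (rule that, rule conjI)
    then show ?thesis unfolding m0_def
      by (rule someI[where P="\<lambda>\<mu>. \<mu> \<in> matchings n \<and> (\<forall>\<phi>\<in>Gstar n. profile_act \<phi> q = q \<longrightarrow> perm_conj \<phi> \<mu> = \<mu>)"])
  qed
  have "mechanism n F"
    unfolding mechanism_def F_def
  proof (intro ballI)
    fix p assume p: "p \<in> profiles n"
    have "perm_conj (g p) (m0 (r p)) \<in> matchings n"
      using matchings_conj[OF n] m0_prop[OF r_prof[OF p]] g_prop[of p] by blast
    then show "{perm_conj (g p) (m0 (r p))} \<subseteq> matchings n" by simp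
  qed
  moreover have "resolute n F" unfolding resolute_def F_def by simp
  moreover have "symmetric_mech n F"
    unfolding symmetric_mech_def U_symmetric_def
  proof (intro ballI)
    fix p \<phi> assume p: "p \<in> profiles n" and \<phi>: "\<phi> \<in> Gstar n"
    define p' where "p' = profile_act \<phi> p"
    define \<rho> where "\<rho> = r p"
    define \<gamma> where "\<gamma> = g p"
    define \<gamma>' where "\<gamma>' = g p'"
    define \<mu>0 where "\<mu>0 = m0 \<rho>"
    have rp': "r p' = \<rho>" using r_eq[OF \<phi>] by (simp add: p'_def \<rho>_def)
    have \<gamma>: "\<gamma> \<in> Gstar n" "profile_act \<gamma> \<rho> = p" using g_prop \<gamma>_def \<rho>_def by auto
    have \<gamma>': "\<gamma>' \<in> Gstar n" "profile_act \<gamma>' \<rho> = p'" using g_prop \<gamma>'_def rp' by metis+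
    have bb: "bij \<phi>" "bij \<gamma>" "bij \<gamma>'" "bij (inv \<gamma>')" using \<phi> \<gamma> \<gamma>' Gstar_bij bij_imp_bij_inv by blast+
    define \<delta> where "\<delta> = inv \<gamma>' \<circ> (\<phi> \<circ> \<gamma>)"
    have \<delta>G: "\<delta> \<in> Gstar n" unfolding \<delta>_def using \<phi> \<gamma> \<gamma>' Gstar_comp[OF n] Gstar_inv[OF n] by blast
    have "profile_act \<delta> \<rho> = profile_act (inv \<gamma>') (profile_act \<phi> (profile_act \<gamma> \<rho>))"
      unfolding \<delta>_def using bb by (simp add: profile_act_comp bij_comp)
    also have "\<dots> = \<rho>" using \<gamma> \<gamma>' bb profile_act_inv[of \<gamma>' \<rho>] by (simp add: p'_def)
    finally have "perm_conj \<delta> \<mu>0 = \<mu>0" using m0_prop[OF r_prof[OF p]] \<delta>G \<mu>0_def \<rho>_def by blast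
    then have "perm_conj \<gamma>' \<mu>0 = perm_conj \<gamma>' (perm_conj \<delta> \<mu>0)" by simp
    also have "\<dots> = perm_conj (\<gamma>' \<circ> \<delta>) \<mu>0" using bb \<delta>G Gstar_bij by (simp add: perm_conj_comp)
    also have "\<gamma>' \<circ> \<delta> = \<phi> \<circ> \<gamma>" unfolding \<delta>_def
    proof -
      have "\<gamma>' \<circ> inv \<gamma>' = id" using bb(3) bij_is_surj surj_iff by blast
      then show "\<gamma>' \<circ> (inv \<gamma>' \<circ> (\<phi> \<circ> \<gamma>)) = \<phi> \<circ> \<gamma>" by (simp add: o_assoc)
    qed
    also have "perm_conj (\<phi> \<circ> \<gamma>) \<mu>0 = perm_conj \<phi> (perm_conj \<gamma> \<mu>0)" using bb by (simp add: perm_conj_comp)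
    finally have "perm_conj \<gamma>' \<mu>0 = perm_conj \<phi> (perm_conj \<gamma> \<mu>0)" .
    then show "F (profile_act \<phi> p) = perm_conj \<phi> ` F p"
      by (simp add: F_def p'_def[symmetric] rp' \<gamma>'_def[symmetric] \<mu>0_def \<gamma>_def[symmetric] \<rho>_def[symmetric])
  qed
  ultimately show ?thesis by blast
qed

lemma lin_aut:
  assumes fin: "finite A" and lin: "linear_order_on A R" and img: "f ` A = A"
    and pres: "\<And>a b. a \<in> A \<Longrightarrow> b \<in> A \<Longrightarrow> (f a, f b) \<in> R \<longleftrightarrow> (a, b) \<in> R"
    and a: "a \<in> A"
  shows "f a = a"
proof -
  from lin have R: "R \<subseteq> A \<times> A" "refl_on A R" "trans R" "antisym R" "total_on A R"
    unfolding linear_order_on_def partial_order_on_def preorder_on_def by auto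
  have injf: "inj_on f A" using fin img by (simp add: eq_card_imp_inj_on)
  define cnt where "cnt a = card {b\<in>A. (b, a) \<in> R}" for a
  have cnt_f: "cnt (f a) = cnt a" if "a \<in> A" for a
  proof -
    have "{b\<in>A. (b, f a) \<in> R} = f ` {b\<in>A. (b, a) \<in> R}"
    proof
      show "{b\<in>A. (b, f a) \<in> R} \<subseteq> f ` {b\<in>A. (b, a) \<in> R}"
      proof
        fix b assume b: "b \<in> {b\<in>A. (b, f a) \<in> R}"
        then obtain c where c: "c \<in> A" "b = f c" using img by auto
        then show "b \<in> f ` {b\<in>A. (b, a) \<in> R}" using b pres[OF c(1) that] by auto
      qed
      show "f ` {b\<in>A. (b, a) \<in> R} \<subseteq> {b\<in>A. (b, f a) \<in> R}"
        using pres[OF _ that] img by auto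
    qed
    then show ?thesis unfolding cnt_def
      by (simp add: card_image inj_on_subset[OF injf])
  qed
  have cnt_inj: "x = y" if "x \<in> A" "y \<in> A" "cnt x = cnt y" for x y
  proof (rule ccontr)
    assume ne: "x \<noteq> y"
    have lt: "cnt u < cnt v" if uv: "u \<in> A" "v \<in> A" "u \<noteq> v" "(u, v) \<in> R" for u v
    proof -
      have sub: "{b\<in>A. (b, u) \<in> R} \<subseteq> {b\<in>A. (b, v) \<in> R}"
        using R(3) uv unfolding trans_on_def by blast
      have "v \<in> {b\<in>A. (b, v) \<in> R}" using R(2) uv unfolding refl_on_def by auto
      moreover have "v \<notin> {b\<in>A. (b, u) \<in> R}" using R(4) uv unfolding antisym_on_def by blast
      ultimately have "{b\<in>A. (b, u) \<in> R} \<subset> {b\<in>A. (b, v) \<in> R}" using sub by blast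
      then show ?thesis unfolding cnt_def by (rule psubset_card_mono[rotated]) (use fin in auto)
    qed
    from R(5) that ne have "(x, y) \<in> R \<or> (y, x) \<in> R" unfolding total_on_def by blast
    then show False using lt[of x y] lt[of y x] that ne by auto
  qed
  have "f a \<in> A" using a img by auto
  then show ?thesis using cnt_inj cnt_f a by blast
qed

lemma finite_agents: "finite (agents n)" by (simp add: agents_def women_def men_def)
lemma finite_women: "finite (women n)" by (simp add: women_def)
lemma finite_men: "finite (men n)" by (simp add: men_def)

lemma stab_rel: assumes p: "profile_act \<phi> p = p" and b: "bij \<phi>"
  shows "(\<phi> a, \<phi> c) \<in> p (\<phi> y) \<longleftrightarrow> (a, c) \<in> p y"
proof -
  have "p (\<phi> y) = rel_act \<phi> (p y)" using fun_cong[OF p, of "\<phi> y"] b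
    by (simp add: profile_act_def bij_is_inj)
  then show ?thesis using b by (simp add: rel_act_def bij_is_inj)
qed

lemma stab_free:
  assumes n: "n \<ge> 1" and p: "p \<in> profiles n" and g: "\<phi> \<in> Gstar n" and st: "profile_act \<phi> p = p"
    and x: "x \<in> agents n" and fx: "\<phi> x = x"
  shows "\<phi> = id"
proof -
  have b: "bij \<phi>" using Gstar_bij[OF g] .
  have P: "\<forall>x\<in>women n. linear_order_on (men n) (p x)" "\<forall>y\<in>men n. linear_order_on (women n) (p y)"
    using p unfolding profiles_def by auto
  have side: "\<phi> ` women n = women n \<and> \<phi> ` men n = men n"
  proof -
    have "\<not> (\<phi> ` women n = men n \<and> \<phi> ` men n = women n)"
      using x fx W_M_disj[of n] unfolding agents_def by (metis IntI empty_iff image_eqI UnE)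
    then show ?thesis using g Gstar_iff[OF n] by blast
  qed
  have fixM: "\<phi> m = m" if "y \<in> women n" "\<phi> y = y" "m \<in> men n" for y m
    using lin_aut[OF finite_men P(1)[rule_format, OF that(1)] conjunct2[OF side] _ that(3)]
      stab_rel[OF st b, of _ _ y] that(2) by metis
  have fixW: "\<phi> w = w" if "y \<in> men n" "\<phi> y = y" "w \<in> women n" for y w
    using lin_aut[OF finite_women P(2)[rule_format, OF that(1)] conjunct1[OF side] _ that(3)]
      stab_rel[OF st b, of _ _ y] that(2) by metis
  have n1: "1 \<in> women n" "n+1 \<in> men n" using n by (auto simp: women_def men_def)
  have allM: "\<forall>m\<in>men n. \<phi> m = m" and allW: "\<forall>w\<in>women n. \<phi> w = w"
  proof -
    have "(\<forall>m\<in>men n. \<phi> m = m) \<and> (\<forall>w\<in>women n. \<phi> w = w)"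
    proof (cases "x \<in> women n")
      case True
      then have "\<forall>m\<in>men n. \<phi> m = m" using fixM fx by blast
      then show ?thesis using fixW n1 by blast
    next
      case False
      then have "x \<in> men n" using x by (auto simp: agents_def)
      then have "\<forall>w\<in>women n. \<phi> w = w" using fixW fx by blast
      then show ?thesis using fixM n1 by blast
    qed
    then show "\<forall>m\<in>men n. \<phi> m = m" "\<forall>w\<in>women n. \<phi> w = w" by auto
  qed
  show ?thesis
  proof
    fix z show "\<phi> z = id z"
    proof (cases "z \<in> agents n")
      case True then show ?thesis using allM allW by (auto simp: agents_def)
    next
      case False then show ?thesis using Gstar_perm[OF g] by (simp add: permutes_not_in)
    qed
  qed
qed

definition stab :: "nat \<Rightarrow> profile \<Rightarrow> (nat \<Rightarrow> nat) set" where
  "stab n p = {\<phi> \<in> Gstar n. profile_act \<phi> p = p}"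

lemma stab_comp: "n \<ge> 1 \<Longrightarrow> \<phi> \<in> stab n p \<Longrightarrow> \<psi> \<in> stab n p \<Longrightarrow> \<phi> \<circ> \<psi> \<in> stab n p"
  unfolding stab_def by (auto simp: Gstar_comp profile_act_comp Gstar_bij)

lemma stab_inv: "n \<ge> 1 \<Longrightarrow> \<phi> \<in> stab n p \<Longrightarrow> inv \<phi> \<in> stab n p"
  unfolding stab_def using Gstar_inv profile_act_inv Gstar_bij by (metis (mono_tags, lifting) mem_Collect_eq)

lemma stab_id: "n \<ge> 1 \<Longrightarrow> id \<in> stab n p"
  unfolding stab_def by (simp add: Gstar_id profile_act_id)

lemma stab_pow: "n \<ge> 1 \<Longrightarrow> \<phi> \<in> stab n p \<Longrightarrow> \<phi> ^^ k \<in> stab n p"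
  by (induction k) (auto simp: stab_id stab_comp)

lemma even_invol:
  assumes "finite A" "\<forall>x\<in>A. f x \<in> A \<and> f (f x) = x \<and> f x \<noteq> x"
  shows "even (card A)"
  using assms
proof (induction "card A" arbitrary: A rule: less_induct)
  case less
  show ?case
  proof (cases "A = {}")
    case True then show ?thesis by simp
  next
    case False
    then obtain x where x: "x \<in> A" by blast
    define A' where "A' = A - {x, f x}"
    have fx: "f x \<in> A" "f x \<noteq> x" using less.prems x by auto
    have s2: "{x, f x} \<subseteq> A" "card {x, f x} = 2" using x fx by auto
    have "card A \<ge> 2" using card_mono[OF less.prems(1) s2(1)] s2(2) by simp
    then have c: "card A = card A' + 2" unfolding A'_def using less.prems(1) s2
      by (simp add: card_Diff_subset finite_subset)
    have ffx: "f (f x) = x" using less.prems(2) x by blast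
    have "\<forall>y\<in>A'. f y \<in> A' \<and> f (f y) = y \<and> f y \<noteq> y"
    proof
      fix y assume y: "y \<in> A'"
      then have y1: "y \<in> A" "y \<noteq> x" "y \<noteq> f x" by (auto simp: A'_def)
      have P: "f y \<in> A" "f (f y) = y" "f y \<noteq> y" using less.prems(2) y1(1) by auto
      have "f y \<noteq> x" using P(2) y1(3) by auto
      moreover have "f y \<noteq> f x" using P(2) ffx y1(2) by metis
      ultimately show "f y \<in> A' \<and> f (f y) = y \<and> f y \<noteq> y" using P by (auto simp: A'_def)
    qed
    then have "even (card A')" using less.hyps[of A'] c less.prems(1) unfolding A'_def by auto
    then show ?thesis using c by simp
  qed
qed

lemma pow_img: "\<phi> ` A = A \<Longrightarrow> (\<phi> ^^ k) ` A = A"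
proof (induction k)
  case 0 then show ?case by simp
next
  case (Suc k)
  have e: "(\<phi> ^^ Suc k) ` X = \<phi> ` ((\<phi> ^^ k) ` X)" for X by (simp add: image_comp)
  show ?case using Suc unfolding e by auto
qed

lemma pow_img_swap: "\<phi> ` A = B \<Longrightarrow> \<phi> ` B = A \<Longrightarrow>
  (\<phi> ^^ k) ` A = (if even k then A else B) \<and> (\<phi> ^^ k) ` B = (if even k then B else A)"
proof (induction k)
  case 0 then show ?case by simp
next
  case (Suc k)
  have e: "(\<phi> ^^ Suc k) ` X = \<phi> ` ((\<phi> ^^ k) ` X)" for X by (simp add: image_comp)
  show ?case using Suc unfolding e by auto
qed

lemma stab_free': "n \<ge> 1 \<Longrightarrow> p \<in> profiles n \<Longrightarrow> \<phi> \<in> stab n p \<Longrightarrow> x \<in> agents n \<Longrightarrow> \<phi> x = x \<Longrightarrow> \<phi> = id"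
  unfolding stab_def using stab_free by blast

lemma no_invol:
  assumes n: "n \<ge> 1" "odd n" and p: "p \<in> profiles n" and r: "r \<in> stab n p"
    and side: "r ` women n = women n" and inv: "r \<circ> r = id"
  shows "r = id"
proof (rule ccontr)
  assume ne: "r \<noteq> id"
  have "\<forall>x\<in>women n. r x \<in> women n \<and> r (r x) = x \<and> r x \<noteq> x"
  proof
    fix x assume x: "x \<in> women n"
    have "r x \<noteq> x" using stab_free'[OF n(1) p r, of x] x ne by (auto simp: agents_def)
    then show "r x \<in> women n \<and> r (r x) = x \<and> r x \<noteq> x" using side x fun_cong[OF inv, of x] by auto
  qed
  then have "even (card (women n))" using even_invol finite_women by blast
  then show False using n(2) by (simp add: women_def)
qed

lemma odd_power:
  assumes n: "n \<ge> 1" "odd n" and p: "p \<in> profiles n" and r: "r \<in> stab n p"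
    and side: "r ` women n = women n"
  shows "k > 0 \<Longrightarrow> r ^^ k = id \<Longrightarrow> \<exists>l. odd l \<and> r ^^ l = id"
proof (induction k rule: less_induct)
  case (less k)
  show ?case
  proof (cases "odd k")
    case True then show ?thesis using less.prems by blast
  next
    case False
    then obtain j where j: "k = 2 * j" by (metis evenE)
    then have j0: "j > 0" "j < k" using less.prems by auto
    have s: "r ^^ j \<in> stab n p" using stab_pow[OF n(1) r] .
    have "(r ^^ j) \<circ> (r ^^ j) = r ^^ (j + j)" by (simp only: funpow_add)
    also have "j + j = k" using j by simp
    finally have "(r ^^ j) \<circ> (r ^^ j) = r ^^ k" .
    with less.prems(2) have rr: "(r ^^ j) \<circ> (r ^^ j) = id" by (simp only:)
    have "r ^^ j = id" using no_invol[OF n p s pow_img[OF side] rr] .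
    then show ?thesis using less.IH[OF j0(2) j0(1)] by blast
  qed
qed

lemma finite_order:
  assumes n: "n \<ge> 1" and "q \<in> Gstar n" shows "\<exists>k>0. q ^^ k = id"
proof -
  have fin: "finite (Gstar n)"
    by (rule finite_subset[OF _ finite_permutations[OF finite_agents]]) (auto simp: Gstar_def)
  have b: "bij q" using Gstar_bij[OF assms(2)] .
  have inG: "q ^^ i \<in> Gstar n" for i
  proof (induction i)
    case 0 then show ?case using Gstar_id[OF n] by (simp only: funpow.simps(1))
  next
    case (Suc i)
    show ?case by (simp only: funpow.simps(2)) (rule Gstar_comp[OF n assms(2) Suc])
  qed
  have "\<not> inj (\<lambda>i::nat. q ^^ i)"
  proof
    assume "inj (\<lambda>i::nat. q ^^ i)"
    moreover have "finite (range (\<lambda>i::nat. q ^^ i))" by (rule finite_subset[OF _ fin]) (auto simp: inG)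
    ultimately show False using finite_imageD by fastforce
  qed
  then obtain i j where ij: "i \<noteq> j" "q ^^ i = q ^^ j" unfolding inj_def by blast
  have main: "q ^^ (b - a) = id" if "a < b" "q ^^ a = q ^^ b" for a b
  proof -
    have "q ^^ b = q ^^ (b - a) \<circ> q ^^ a" using that(1) by (simp add: funpow_add[symmetric])
    then have e: "q ^^ (b - a) \<circ> q ^^ a = id \<circ> q ^^ a" using that(2) by simp
    have surj: "surj (q ^^ a)" using b bij_fn bij_is_surj by blast
    show ?thesis
    proof
      fix x
      obtain y where "x = (q ^^ a) y" using surj by (metis surjD)
      then show "(q ^^ (b - a)) x = id x" using fun_cong[OF e, of y] by simp
    qed
  qed
  show ?thesis
  proof (cases "i < j")
    case True then show ?thesis using main[OF True ij(2)] by (intro exI[of _ "j - i"]) auto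
  next
    case False then have "j < i" using ij by auto
    then show ?thesis using main[OF \<open>j < i\<close> ij(2)[symmetric]] by (intro exI[of _ "i - j"]) auto
  qed
qed

lemma invol_exists:
  assumes n: "n \<ge> 1" "odd n" and p: "p \<in> profiles n" and psi: "\<psi> \<in> stab n p"
    and side: "\<psi> ` women n = men n" "\<psi> ` men n = women n"
  shows "\<exists>c\<in>stab n p. c \<circ> c = id \<and> c ` women n = men n \<and> c ` men n = women n"
proof -
  define q where "q = \<psi> \<circ> \<psi>"
  have q: "q \<in> stab n p" unfolding q_def using stab_comp[OF n(1) psi psi] .
  have "q ` women n = \<psi> ` (\<psi> ` women n)" unfolding q_def by (simp add: image_comp)
  then have qs: "q ` women n = women n" using side by simp
  obtain k where k: "k > 0" "q ^^ k = id" using finite_order[OF n(1), of q] q unfolding stab_def by blast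
  obtain l where l: "odd l" "q ^^ l = id" using odd_power[OF n p q qs k] by blast
  define c where "c = \<psi> ^^ l"
  have "c \<in> stab n p" unfolding c_def using stab_pow[OF n(1) psi] .
  moreover have "c \<circ> c = id"
  proof -
    have "c \<circ> c = \<psi> ^^ (2 * l)" unfolding c_def by (simp add: funpow_add[symmetric] mult_2)
    also have "\<dots> = (\<psi> ^^ 2) ^^ l" by (simp add: funpow_mult)
    also have "\<psi> ^^ 2 = q" unfolding q_def by (simp add: numeral_2_eq_2)
    finally have "c \<circ> c = q ^^ l" .
    with l(2) show ?thesis by (simp only:)
  qed
  moreover have "c ` women n = men n \<and> c ` men n = women n"
    unfolding c_def using pow_img_swap[OF side, of l] l(1) by simp
  ultimately show ?thesis by blast
qed

lemma stab_G: "\<phi> \<in> stab n p \<Longrightarrow> \<phi> \<in> Gstar n" by (simp add: stab_def)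

lemma stab_sides: "n \<ge> 1 \<Longrightarrow> \<phi> \<in> stab n p \<Longrightarrow>
  (\<phi> ` women n = women n \<and> \<phi> ` men n = men n) \<or> (\<phi> ` women n = men n \<and> \<phi> ` men n = women n)"
  using Gstar_iff[of n \<phi>] stab_G[of \<phi> n p] by simp

lemma stab_bij: "\<phi> \<in> stab n p \<Longrightarrow> bij \<phi>" by (rule Gstar_bij[OF stab_G])

lemma stab_cancel: "\<phi> \<in> stab n p \<Longrightarrow> \<phi> (inv \<phi> x) = x" "\<phi> \<in> stab n p \<Longrightarrow> inv \<phi> (\<phi> x) = x"
  by (simp_all add: surj_f_inv_f bij_is_surj inv_f_f bij_is_inj stab_bij)

lemma free_eq:
  assumes n: "n \<ge> 1" and p: "p \<in> profiles n" and g: "g \<in> stab n p" "g' \<in> stab n p"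
    and u: "u \<in> agents n" and e: "g u = g' u"
  shows "g = g'"
proof -
  define h where "h = inv g' \<circ> g"
  have h: "h \<in> stab n p" unfolding h_def using stab_comp[OF n stab_inv[OF n g(2)] g(1)] .
  have "h u = u" unfolding h_def using e stab_cancel(2)[OF g(2)] by simp
  then have "h = id" using stab_free'[OF n p h u] by blast
  show "g = g'"
  proof
    fix x
    have "g x = g' (inv g' (g x))" using stab_cancel(1)[OF g(2)] by simp
    also have "inv g' (g x) = x" using fun_cong[OF \<open>h = id\<close>, of x] unfolding h_def by simp
    finally show "g x = g' x" .
  qed
qed

lemma build:
  assumes n: "n \<ge> 1" and p: "p \<in> profiles n"
  and pick: "\<And>X a. X \<subseteq> agents n \<Longrightarrow> (\<forall>g\<in>stab n p. g ` X \<subseteq> X) \<Longrightarrow>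
      card (X \<inter> women n) = card (X \<inter> men n) \<Longrightarrow> a \<in> X \<inter> women n \<Longrightarrow>
      \<exists>b\<in>X \<inter> men n. \<forall>d\<in>stab n p. d a = b \<longrightarrow> d b = a"
  shows "X \<subseteq> agents n \<Longrightarrow> (\<forall>g\<in>stab n p. g ` X \<subseteq> X) \<Longrightarrow>
      card (X \<inter> women n) = card (X \<inter> men n) \<Longrightarrow>
      \<exists>\<mu>. (\<forall>x. x \<notin> X \<longrightarrow> \<mu> x = x) \<and> (\<forall>x\<in>X \<inter> women n. \<mu> x \<in> X \<inter> men n)
         \<and> (\<forall>x\<in>X \<inter> men n. \<mu> x \<in> X \<inter> women n) \<and> (\<forall>x\<in>X. \<mu> (\<mu> x) = x)
         \<and> (\<forall>g\<in>stab n p. \<forall>x. \<mu> (g x) = g (\<mu> x))"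
proof (induction "card (X \<inter> women n)" arbitrary: X rule: less_induct)
  case less
  let ?G = "stab n p"
  let ?W = "women n" and ?M = "men n"
  have finX: "finite X" using less.prems(1) finite_agents finite_subset by blast
  have XWM: "X = (X \<inter> ?W) \<union> (X \<inter> ?M)" using less.prems(1) by (auto simp: agents_def)
  have WMd: "?W \<inter> ?M = {}" by (rule W_M_disj)
  show ?case
  proof (cases "X \<inter> ?W = {}")
    case True
    then have "X \<inter> ?M = {}" using less.prems(3) finX by simp
    then have "X = {}" using True XWM by blast
    then show ?thesis by (intro exI[of _ id]) auto
  next
    case False
    then obtain a where a: "a \<in> X \<inter> ?W" by blast
    obtain b where b: "b \<in> X \<inter> ?M" and P: "\<forall>d\<in>?G. d a = b \<longrightarrow> d b = a"
      using pick[OF less.prems a] by blast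
    have aA: "a \<in> agents n" and bA: "b \<in> agents n" using a b by (auto simp: agents_def)
    define key where "key x y \<longleftrightarrow> (\<exists>g\<in>?G. (x = g a \<and> y = g b) \<or> (x = g b \<and> y = g a))" for x y
    have cross: "g b = g' a" if "g \<in> ?G" "g' \<in> ?G" "g a = g' b" for g g'
    proof -
      define h where "h = inv g' \<circ> g"
      have h: "h \<in> ?G" unfolding h_def using stab_comp[OF n stab_inv[OF n that(2)] that(1)] .
      have "h a = b" unfolding h_def using that(3) stab_cancel(2)[OF that(2)] by simp
      then have "h b = a" using P h by blast
      then have "g' (h b) = g' a" by simp
      then show ?thesis unfolding h_def using stab_cancel(1)[OF that(2)] by simp
    qed
    have uniq: "y = y'" if "key x y" "key x y'" for x y y'
    proof -
      from that obtain g g' where g: "g \<in> ?G" "g' \<in> ?G"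
        and c1: "(x = g a \<and> y = g b) \<or> (x = g b \<and> y = g a)"
        and c2: "(x = g' a \<and> y' = g' b) \<or> (x = g' b \<and> y' = g' a)" unfolding key_def by blast
      show ?thesis using c1 c2
      proof (elim disjE conjE)
        assume "x = g a" "y = g b" "x = g' a" "y' = g' b"
        then show "y = y'" using free_eq[OF n p g aA] by simp
      next
        assume "x = g a" "y = g b" "x = g' b" "y' = g' a"
        then show "y = y'" using cross[OF g] by simp
      next
        assume "x = g b" "y = g a" "x = g' a" "y' = g' b"
        then show "y = y'" using cross[OF g(2,1)] by simp
      next
        assume "x = g b" "y = g a" "x = g' b" "y' = g' a"
        then show "y = y'" using free_eq[OF n p g bA] by simp
      qed
    qed
    have key_sym: "key x y \<Longrightarrow> key y x" for x y unfolding key_def by blast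
    have key_eqv: "key (h x) (h y)" if "key x y" "h \<in> ?G" for x y h
    proof -
      from that(1) obtain g where g: "g \<in> ?G" "(x = g a \<and> y = g b) \<or> (x = g b \<and> y = g a)"
        unfolding key_def by blast
      have "h \<circ> g \<in> ?G" using stab_comp[OF n that(2) g(1)] .
      moreover have "(h \<circ> g) a = h (g a)" "(h \<circ> g) b = h (g b)" by simp_all
      ultimately show ?thesis unfolding key_def using g(2) by metis
    qed
    have key_side: "(x \<in> ?W \<and> y \<in> ?M) \<or> (x \<in> ?M \<and> y \<in> ?W)" if "key x y" for x y
    proof -
      from that obtain g where g: "g \<in> ?G" "(x = g a \<and> y = g b) \<or> (x = g b \<and> y = g a)"
        unfolding key_def by blast
      from stab_sides[OF n g(1)] show ?thesis using g(2) a b by blast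
    qed
    define Ob where "Ob = {x. \<exists>y. key x y}"
    define \<mu>0 where "\<mu>0 x = (THE y. key x y)" for x
    have key_mu0: "key x (\<mu>0 x)" if "x \<in> Ob" for x
    proof -
      from that obtain y where "key x y" unfolding Ob_def by blast
      then have "\<exists>!y. key x y" using uniq by blast
      then show ?thesis unfolding \<mu>0_def by (rule theI')
    qed
    have mu0_eq: "\<mu>0 x = y" if "key x y" for x y
      using uniq[OF key_mu0 that] that unfolding Ob_def by blast
    have mu0_O: "\<mu>0 x \<in> Ob" if "x \<in> Ob" for x
      using key_sym[OF key_mu0[OF that]] unfolding Ob_def by blast
    have mu0_inv: "\<mu>0 (\<mu>0 x) = x" if "x \<in> Ob" for x
      using mu0_eq[OF key_sym[OF key_mu0[OF that]]] .
    have O_inv: "h x \<in> Ob" if "x \<in> Ob" "h \<in> ?G" for x h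
      using key_eqv[OF key_mu0[OF that(1)] that(2)] unfolding Ob_def by blast
    have O_inv': "x \<in> Ob" if "h x \<in> Ob" "h \<in> ?G" for x h
      using O_inv[OF that(1) stab_inv[OF n that(2)]] stab_cancel(2)[OF that(2)] by simp
    have mu0_eqv: "\<mu>0 (h x) = h (\<mu>0 x)" if "x \<in> Ob" "h \<in> ?G" for x h
      using mu0_eq[OF key_eqv[OF key_mu0[OF that(1)] that(2)]] .
    have mu0_side: "(x \<in> ?W \<and> \<mu>0 x \<in> ?M) \<or> (x \<in> ?M \<and> \<mu>0 x \<in> ?W)" if "x \<in> Ob" for x
      using key_side[OF key_mu0[OF that]] .
    have "key a b" unfolding key_def using stab_id[OF n] by (intro bexI[of _ id]) auto
    then have aO: "a \<in> Ob" unfolding Ob_def by blast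
    have OX: "Ob \<subseteq> X"
    proof
      fix x assume "x \<in> Ob"
      then obtain y where "key x y" unfolding Ob_def by blast
      then obtain g where g: "g \<in> ?G" "(x = g a \<and> y = g b) \<or> (x = g b \<and> y = g a)"
        unfolding key_def by blast
      have "g a \<in> X" "g b \<in> X" using less.prems(2) g(1) a b by auto
      then show "x \<in> X" using g(2) by auto
    qed
    define X' where "X' = X - Ob"
    have X'1: "X' \<subseteq> agents n" using less.prems(1) unfolding X'_def by blast
    have X'2: "\<forall>g\<in>?G. g ` X' \<subseteq> X'"
    proof (intro ballI subsetI)
      fix g y assume g: "g \<in> ?G" and y: "y \<in> g ` X'"
      then obtain x where x: "x \<in> X" "x \<notin> Ob" "y = g x" unfolding X'_def by blast
      have "g x \<in> X" using less.prems(2) g x(1) by blast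
      moreover have "g x \<notin> Ob" using O_inv'[OF _ g] x(2) by blast
      ultimately show "y \<in> X'" unfolding X'_def using x(3) by blast
    qed
    have bij0: "bij_betw \<mu>0 (Ob \<inter> ?W) (Ob \<inter> ?M)"
      by (rule bij_betw_byWitness[where f'=\<mu>0]) (use mu0_inv mu0_O mu0_side WMd in auto)
    have cOWM: "card (Ob \<inter> ?W) = card (Ob \<inter> ?M)" using bij_betw_same_card[OF bij0] .
    have finO: "finite Ob" using OX finX finite_subset by blast
    have cW: "card (X' \<inter> ?W) = card (X \<inter> ?W) - card (Ob \<inter> ?W)"
    proof -
      have "X' \<inter> ?W = (X \<inter> ?W) - (Ob \<inter> ?W)" unfolding X'_def by blast
      moreover have "Ob \<inter> ?W \<subseteq> X \<inter> ?W" "finite (Ob \<inter> ?W)" using OX finO by auto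
      ultimately show ?thesis by (simp add: card_Diff_subset)
    qed
    have cM: "card (X' \<inter> ?M) = card (X \<inter> ?M) - card (Ob \<inter> ?M)"
    proof -
      have "X' \<inter> ?M = (X \<inter> ?M) - (Ob \<inter> ?M)" unfolding X'_def by blast
      moreover have "Ob \<inter> ?M \<subseteq> X \<inter> ?M" "finite (Ob \<inter> ?M)" using OX finO by auto
      ultimately show ?thesis by (simp add: card_Diff_subset)
    qed
    have X'3: "card (X' \<inter> ?W) = card (X' \<inter> ?M)" using cW cM cOWM less.prems(3) by simp
    have "card (Ob \<inter> ?W) > 0" using aO a finO by (auto simp: card_gt_0_iff)
    moreover have "card (Ob \<inter> ?W) \<le> card (X \<inter> ?W)" using OX finX by (intro card_mono) auto
    ultimately have lt: "card (X' \<inter> ?W) < card (X \<inter> ?W)" using cW by linarith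
    obtain \<mu>' where m': "\<forall>x. x \<notin> X' \<longrightarrow> \<mu>' x = x" "\<forall>x\<in>X' \<inter> ?W. \<mu>' x \<in> X' \<inter> ?M"
         "\<forall>x\<in>X' \<inter> ?M. \<mu>' x \<in> X' \<inter> ?W" "\<forall>x\<in>X'. \<mu>' (\<mu>' x) = x"
         "\<forall>g\<in>?G. \<forall>x. \<mu>' (g x) = g (\<mu>' x)"
      using less.hyps[OF lt X'1 X'2 X'3] by blast
    have m'X': "\<mu>' x \<in> X'" if "x \<in> X'" for x
      using that m'(2,3) X'1 by (auto simp: agents_def)
    define \<mu> where "\<mu> x = (if x \<in> Ob then \<mu>0 x else \<mu>' x)" for x
    have r1: "\<forall>x. x \<notin> X \<longrightarrow> \<mu> x = x" using OX m'(1) unfolding \<mu>_def X'_def by auto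
    have r2: "\<forall>x\<in>X \<inter> ?W. \<mu> x \<in> X \<inter> ?M"
    proof
      fix x assume x: "x \<in> X \<inter> ?W"
      show "\<mu> x \<in> X \<inter> ?M"
      proof (cases "x \<in> Ob")
        case True
        then have "\<mu>0 x \<in> ?M" using mu0_side[OF True] x WMd by blast
        then show ?thesis using True mu0_O OX unfolding \<mu>_def by auto
      next
        case False
        then have "x \<in> X' \<inter> ?W" using x unfolding X'_def by blast
        then have "\<mu>' x \<in> X' \<inter> ?M" using m'(2) by blast
        then show ?thesis using False unfolding \<mu>_def X'_def by auto
      qed
    qed
    have r3: "\<forall>x\<in>X \<inter> ?M. \<mu> x \<in> X \<inter> ?W"
    proof
      fix x assume x: "x \<in> X \<inter> ?M"
      show "\<mu> x \<in> X \<inter> ?W"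
      proof (cases "x \<in> Ob")
        case True
        then have "\<mu>0 x \<in> ?W" using mu0_side[OF True] x WMd by blast
        then show ?thesis using True mu0_O OX unfolding \<mu>_def by auto
      next
        case False
        then have "x \<in> X' \<inter> ?M" using x unfolding X'_def by blast
        then have "\<mu>' x \<in> X' \<inter> ?W" using m'(3) by blast
        then show ?thesis using False unfolding \<mu>_def X'_def by auto
      qed
    qed
    have r4: "\<forall>x\<in>X. \<mu> (\<mu> x) = x"
    proof
      fix x assume x: "x \<in> X"
      show "\<mu> (\<mu> x) = x"
      proof (cases "x \<in> Ob")
        case True then show ?thesis using mu0_O mu0_inv unfolding \<mu>_def by simp
      next
        case False
        then have "x \<in> X'" using x unfolding X'_def by blast
        then show ?thesis using m'X' m'(4) unfolding \<mu>_def X'_def by auto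
      qed
    qed
    have r5: "\<forall>g\<in>?G. \<forall>x. \<mu> (g x) = g (\<mu> x)"
    proof (intro ballI allI)
      fix g x assume g: "g \<in> ?G"
      show "\<mu> (g x) = g (\<mu> x)"
      proof (cases "x \<in> Ob")
        case True then show ?thesis using O_inv[OF True g] mu0_eqv[OF True g] unfolding \<mu>_def by simp
      next
        case False
        then have "g x \<notin> Ob" using O_inv'[OF _ g] by blast
        then show ?thesis using False m'(5) g unfolding \<mu>_def by simp
      qed
    qed
    show ?thesis using r1 r2 r3 r4 r5 by blast
  qed
qed

lemma card_women: "card (women n) = n" by (simp add: women_def)
lemma card_men: "card (men n) = n" by (simp add: men_def)

lemma equivariant_matching:
  assumes n2: "n \<ge> 2" and odd: "odd n" and p: "p \<in> profiles n"
  shows "\<exists>\<mu>\<in>matchings n. \<forall>\<phi>\<in>Gstar n. profile_act \<phi> p = p \<longrightarrow> perm_conj \<phi> \<mu> = \<mu>"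
proof -
  have n: "n \<ge> 1" using n2 by simp
  let ?G = "stab n p"
  let ?W = "women n" and ?M = "men n"
  have WMd: "?W \<inter> ?M = {}" by (rule W_M_disj)
  have pick: "\<exists>b\<in>X \<inter> ?M. \<forall>d\<in>?G. d a = b \<longrightarrow> d b = a"
    if X: "X \<subseteq> agents n" "\<forall>g\<in>?G. g ` X \<subseteq> X" "card (X \<inter> ?W) = card (X \<inter> ?M)"
      and a: "a \<in> X \<inter> ?W" for X a
  proof (cases "\<forall>g\<in>?G. g ` ?W = ?W")
    case True
    have finX: "finite X" using X(1) finite_agents finite_subset by blast
    have "card (X \<inter> ?W) > 0" using a finX by (auto simp: card_gt_0_iff)
    then have "X \<inter> ?M \<noteq> {}" using X(3) by auto
    then obtain b where b: "b \<in> X \<inter> ?M" by blast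
    have "\<forall>d\<in>?G. d a \<noteq> b"
    proof
      fix d assume d: "d \<in> ?G"
      have "d a \<in> ?W" using True d a by blast
      then show "d a \<noteq> b" using b WMd by blast
    qed
    then show ?thesis using b by blast
  next
    case False
    then obtain \<psi> where \<psi>: "\<psi> \<in> ?G" "\<psi> ` ?W \<noteq> ?W" by blast
    then have sd: "\<psi> ` ?W = ?M" "\<psi> ` ?M = ?W" using stab_sides[OF n \<psi>(1)] by auto
    obtain c where c: "c \<in> ?G" "c \<circ> c = id" "c ` ?W = ?M" "c ` ?M = ?W"
      using invol_exists[OF n odd p \<psi>(1) sd] by blast
    have b: "c a \<in> X \<inter> ?M" using X(2) c(1,3) a by blast
    have aA: "a \<in> agents n" using a by (auto simp: agents_def)
    have "\<forall>d\<in>?G. d a = c a \<longrightarrow> d (c a) = a"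
    proof (intro ballI impI)
      fix d assume d: "d \<in> ?G" "d a = c a"
      then have "d = c" using free_eq[OF n p d(1) c(1) aA] by blast
      then show "d (c a) = a" using fun_cong[OF c(2), of a] by simp
    qed
    then show ?thesis using b by blast
  qed
  have inv_ag: "\<forall>g\<in>?G. g ` agents n \<subseteq> agents n"
    using stab_G Gstar_perm permutes_image by blast
  have cc: "card (agents n \<inter> ?W) = card (agents n \<inter> ?M)"
  proof -
    have "agents n \<inter> ?W = ?W" "agents n \<inter> ?M = ?M" by (auto simp: agents_def)
    then show ?thesis by (simp add: card_women card_men)
  qed
  obtain \<mu> where m: "\<forall>x. x \<notin> agents n \<longrightarrow> \<mu> x = x" "\<forall>x\<in>agents n \<inter> ?W. \<mu> x \<in> agents n \<inter> ?M"
         "\<forall>x\<in>agents n \<inter> ?M. \<mu> x \<in> agents n \<inter> ?W" "\<forall>x\<in>agents n. \<mu> (\<mu> x) = x"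
         "\<forall>g\<in>?G. \<forall>x. \<mu> (g x) = g (\<mu> x)"
    using build[OF n p pick subset_refl inv_ag cc] by blast
  have WA: "?W \<subseteq> agents n" "?M \<subseteq> agents n" by (auto simp: agents_def)
  have mm: "\<mu> \<circ> \<mu> = id"
  proof
    fix x show "(\<mu> \<circ> \<mu>) x = id x"
      using m(1,4) by (cases "x \<in> agents n") auto
  qed
  have bij: "bij \<mu>" using o_bij[OF mm mm] .
  have imW: "\<mu> ` ?W = ?M"
  proof
    show "\<mu> ` ?W \<subseteq> ?M" using m(2) WA by blast
    show "?M \<subseteq> \<mu> ` ?W"
    proof
      fix y assume y: "y \<in> ?M"
      then have "\<mu> y \<in> ?W" "\<mu> (\<mu> y) = y" using m(3,4) WA by auto
      then show "y \<in> \<mu> ` ?W" by (metis image_eqI)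
    qed
  qed
  have imM: "\<mu> ` ?M = ?W"
  proof
    show "\<mu> ` ?M \<subseteq> ?W" using m(3) WA by blast
    show "?W \<subseteq> \<mu> ` ?M"
    proof
      fix y assume y: "y \<in> ?W"
      then have "\<mu> y \<in> ?M" "\<mu> (\<mu> y) = y" using m(2,4) WA by auto
      then show "y \<in> \<mu> ` ?M" by (metis image_eqI)
    qed
  qed
  have "\<mu> ` agents n = agents n" using imW imM by (simp add: agents_def image_Un Un_commute)
  then have "bij_betw \<mu> (agents n) (agents n)"
    using bij bij_betw_imageI bij_is_inj inj_on_subset by (metis subset_UNIV)
  then have perm: "\<mu> permutes agents n" using m(1) by (intro bij_imp_permutes) auto
  have "\<mu> \<in> matchings n" unfolding matchings_def using perm imW imM m(4) by blast
  moreover have "\<forall>\<phi>\<in>Gstar n. profile_act \<phi> p = p \<longrightarrow> perm_conj \<phi> \<mu> = \<mu>"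
  proof (intro ballI impI)
    fix \<phi> assume "\<phi> \<in> Gstar n" "profile_act \<phi> p = p"
    then have g: "\<phi> \<in> ?G" by (simp add: stab_def)
    show "perm_conj \<phi> \<mu> = \<mu>"
    proof
      fix x
      have "perm_conj \<phi> \<mu> x = \<phi> (\<mu> (inv \<phi> x))" by (simp add: perm_conj_def)
      also have "\<dots> = \<mu> (\<phi> (inv \<phi> x))" using m(5) g by simp
      also have "\<dots> = \<mu> x" using stab_cancel(1)[OF g] by simp
      finally show "perm_conj \<phi> \<mu> x = \<mu> x" .
    qed
  qed
  ultimately show ?thesis by blast
qed

theorem theorem3:
  fixes n :: nat
  assumes "n \<ge> 2" and "odd n"
  shows "\<exists>F. mechanism n F \<and> resolute n F \<and> symmetric_mech n F"
  using selection[of n] equivariant_matching[OF assms] assms(1) by simp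

end
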